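(* Let $(G,D,\star)$ be a probabilistic metric space with $\star$ continuous. Then: (1) $(Lip^1_\star(G,\Delta^+),\overline{\mathbb D},\star)$ is a complete probabilistic metric space, and $\delta:G\to Lip^1_\star(G,\Delta^+)$, $a\mapsto\delta_a$, is an isometric embedding, i.e. $\overline{\mathbb D}(\delta_a,\delta_b)=D(a,b)$; (2) if moreover $(G,\cdot,D,\star)$ is an invariant probabilistic metric group and $\star$ is also sup-continuous, then $\delta:(G,\cdot)\to(Lip^1_\star(G,\Delta^+),\odot)$ is a group homomorphism.
   Context: A distribution function is a nondecreasing, left-continuous function $F:[-\infty,+\infty]\to[0,1]$ with $F(-\infty)=0$, $F(+\infty)=1$; $\Delta^+$ is the set of distribution functions with $F(0)=0$, ordered pointwise (a complete lattice with maximum $\mathcal H_0$ and minimum $\mathcal H_\infty$, where $\mathcal H_0(t)=0$ for $t\le0$, $1$ for $t>0$, and $\mathcal H_\infty(t)=0$ for $t<+\infty$, $\mathcal H_\infty(+\infty)=1$). A triangle function is a binary operation $\star$ on $\Delta^+$ that is commutative, associative, nondecreasing in each argument, with $F\star\mathcal H_0=F$; it is sup-continuous if $\sup_i(F_i\star L)=(\sup_iF_i)\star L$ for every nonempty family $(F_i)$ and every $L$. $F_n\xrightarrow{w}F$ means $F_n(t)\to F(t)$ at every continuity point $t\in\mathbb R$ of $F$; $\star$ is continuous if $F_n\star L_n\xrightarrow{w}F\star L$ whenever $F_n\xrightarrow{w}F$, $L_n\xrightarrow{w}L$. A probabilistic metric space $(G,D,\star)$ consists of a set $G$, a triangle function $\star$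 and $D:G\times G\to\Delta^+$ with (i) $D(p,q)=\mathcal H_0$ iff $p=q$; (ii) $D(p,q)=D(q,p)$; (iii) $D(p,q)\star D(q,r)\le D(p,r)$. If $(G,\cdot)$ is a group and $D(pr,qr)=D(rp,rq)=D(p,q)$ for all $p,q,r$, it is an invariant probabilistic metric group. A sequence $(z_n)$ is Cauchy if $D(z_n,z_p)\xrightarrow{w}\mathcal H_0$ as $n,p\to\infty$; completeness means every Cauchy sequence has a point $z$ with $D(z_n,z)\xrightarrow{w}\mathcal H_0$. $Lip^1_\star(G,\Delta^+)$ is the set of maps $f:G\to\Delta^+$ with $D(x,y)\star f(y)\le f(x)$ for all $x,y$. $\delta_a(y)=D(y,a)$. $\Pi(G)$ is the set of $f\in Lip^1_\star(G,\Delta^+)$ for which there is a Cauchy sequence $(a_n)\subset G$ with $D(a_n,x)\xrightarrow{w}f(x)$ for all $x$. $\mathbb D(f,g)=\sup_{x\in G}f(x)\star g(x)$ for $f,g\in\Pi(G)$. $\overline{\mathbb D}$ on $Lip^1_\star(G,\Delta^+)$ is: $\overline{\mathbb D}(f,g)=\mathbb D(f,g)$ if $f,g\in\Pi(G)$; $\overline{\mathbb D}(f,g)=\mathcal H_0$ if $f=g$; $\overline{\mathbb D}(f,g)=\mathcal H_\infty$ if $f\ne g$ and $(f,g)\notin\Pi(G)\times\Pi(G)$. For maps $f,g:G\to\Delta^+$, $(f\odot g)(x)=\sup_{y,z\in G,\ yz=x}f(y)\star g(z)$. *)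

theory Defs
  imports Complex_Main "HOL-Library.Extended_Real" "HOL-Algebra.Group"
begin

type_synonym dfun = "ereal \<Rightarrow> real"

definition distfun :: "dfun \<Rightarrow> bool" where
  "distfun F \<longleftrightarrow> mono F \<and> (\<forall>t. 0 \<le> F t \<and> F t \<le> 1)
     \<and> (\<forall>x::real. ((\<lambda>s. F (ereal s)) \<longlongrightarrow> F (ereal x)) (at_left x))
     \<and> F (-\<infinity>) = 0 \<and> F \<infinity> = 1"

definition DeltaPlus :: "dfun set" where
  "DeltaPlus = {F. distfun F \<and> F 0 = 0}"

definition H0 :: dfun where
  "H0 t = (if t \<le> 0 then 0 else 1)"

definition Hinf :: dfun where
  "Hinf t = (if t = \<infinity> then 1 else 0)"

definition triangle_function :: "(dfun \<Rightarrow> dfun \<Rightarrow> dfun) \<Rightarrow> bool" where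
  "triangle_function tf \<longleftrightarrow>
     (\<forall>F\<in>DeltaPlus. \<forall>L\<in>DeltaPlus. tf F L \<in> DeltaPlus)
   \<and> (\<forall>F\<in>DeltaPlus. \<forall>L\<in>DeltaPlus. tf F L = tf L F)
   \<and> (\<forall>F\<in>DeltaPlus. \<forall>L\<in>DeltaPlus. \<forall>K\<in>DeltaPlus. tf (tf F L) K = tf F (tf L K))
   \<and> (\<forall>F\<in>DeltaPlus. \<forall>F'\<in>DeltaPlus. \<forall>L\<in>DeltaPlus. F \<le> F' \<longrightarrow> tf F L \<le> tf F' L \<and> tf L F \<le> tf L F')
   \<and> (\<forall>F\<in>DeltaPlus. tf F H0 = F)"

text \<open>Pointwise supremum = supremum in the lattice DeltaPlus.\<close>
definition tf_sup_continuous :: "(dfun \<Rightarrow> dfun \<Rightarrow> dfun) \<Rightarrow> bool" where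
  "tf_sup_continuous tf \<longleftrightarrow>
     (\<forall>\<F> L. \<F> \<noteq> {} \<and> \<F> \<subseteq> DeltaPlus \<and> L \<in> DeltaPlus \<longrightarrow>
        (\<lambda>t. SUP F\<in>\<F>. tf F L t) = tf (\<lambda>t. SUP F\<in>\<F>. F t) L)"

definition wconv :: "'i filter \<Rightarrow> ('i \<Rightarrow> dfun) \<Rightarrow> dfun \<Rightarrow> bool" where
  "wconv Fl S L \<longleftrightarrow> (\<forall>t::real. isCont (\<lambda>x. L (ereal x)) t \<longrightarrow>
      ((\<lambda>n. S n (ereal t)) \<longlongrightarrow> L (ereal t)) Fl)"

definition tf_continuous :: "(dfun \<Rightarrow> dfun \<Rightarrow> dfun) \<Rightarrow> bool" where
  "tf_continuous tf \<longleftrightarrow>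
     (\<forall>Fs Ls F L. (\<forall>n. Fs n \<in> DeltaPlus) \<and> (\<forall>n. Ls n \<in> DeltaPlus) \<and> F \<in> DeltaPlus \<and> L \<in> DeltaPlus
        \<and> wconv sequentially Fs F \<and> wconv sequentially Ls L
        \<longrightarrow> wconv sequentially (\<lambda>n. tf (Fs n) (Ls n)) (tf F L))"

definition pm_space :: "'a set \<Rightarrow> ('a \<Rightarrow> 'a \<Rightarrow> dfun) \<Rightarrow> (dfun \<Rightarrow> dfun \<Rightarrow> dfun) \<Rightarrow> bool" where
  "pm_space S D tf \<longleftrightarrow> triangle_function tf
     \<and> (\<forall>p\<in>S. \<forall>q\<in>S. D p q \<in> DeltaPlus)
     \<and> (\<forall>p\<in>S. \<forall>q\<in>S. D p q = H0 \<longleftrightarrow> p = q)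
     \<and> (\<forall>p\<in>S. \<forall>q\<in>S. D p q = D q p)
     \<and> (\<forall>p\<in>S. \<forall>q\<in>S. \<forall>r\<in>S. tf (D p q) (D q r) \<le> D p r)"

definition pm_cauchy :: "'a set \<Rightarrow> ('a \<Rightarrow> 'a \<Rightarrow> dfun) \<Rightarrow> (nat \<Rightarrow> 'a) \<Rightarrow> bool" where
  "pm_cauchy S D z \<longleftrightarrow> (\<forall>n. z n \<in> S)
     \<and> wconv (sequentially \<times>\<^sub>F sequentially) (\<lambda>(n, p). D (z n) (z p)) H0"

definition pm_complete :: "'a set \<Rightarrow> ('a \<Rightarrow> 'a \<Rightarrow> dfun) \<Rightarrow> bool" where
  "pm_complete S D \<longleftrightarrow> (\<forall>z. pm_cauchy S D z \<longrightarrow>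
      (\<exists>x\<in>S. wconv sequentially (\<lambda>n. D (z n) x) H0))"

definition LipS :: "('a \<Rightarrow> 'a \<Rightarrow> dfun) \<Rightarrow> (dfun \<Rightarrow> dfun \<Rightarrow> dfun) \<Rightarrow> ('a \<Rightarrow> dfun) set" where
  "LipS D tf = {f. (\<forall>x. f x \<in> DeltaPlus) \<and> (\<forall>x y. tf (D x y) (f y) \<le> f x)}"

definition pm_delta :: "('a \<Rightarrow> 'a \<Rightarrow> dfun) \<Rightarrow> 'a \<Rightarrow> ('a \<Rightarrow> dfun)" where
  "pm_delta D a = (\<lambda>y. D y a)"

definition PiG :: "('a \<Rightarrow> 'a \<Rightarrow> dfun) \<Rightarrow> (dfun \<Rightarrow> dfun \<Rightarrow> dfun) \<Rightarrow> ('a \<Rightarrow> dfun) set" where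
  "PiG D tf = {f \<in> LipS D tf. \<exists>a. pm_cauchy UNIV D a \<and>
                 (\<forall>x. wconv sequentially (\<lambda>n. D (a n) x) (f x))}"

definition DD :: "(dfun \<Rightarrow> dfun \<Rightarrow> dfun) \<Rightarrow> ('a \<Rightarrow> dfun) \<Rightarrow> ('a \<Rightarrow> dfun) \<Rightarrow> dfun" where
  "DD tf f g = (\<lambda>t. SUP x. tf (f x) (g x) t)"

definition DDbar :: "('a \<Rightarrow> 'a \<Rightarrow> dfun) \<Rightarrow> (dfun \<Rightarrow> dfun \<Rightarrow> dfun) \<Rightarrow> ('a \<Rightarrow> dfun) \<Rightarrow> ('a \<Rightarrow> dfun) \<Rightarrow> dfun" where
  "DDbar D tf f g = (if f \<in> PiG D tf \<and> g \<in> PiG D tf then DD tf f g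
                     else if f = g then H0 else Hinf)"

definition invariant_pm_group :: "('a, 'b) monoid_scheme \<Rightarrow> ('a \<Rightarrow> 'a \<Rightarrow> dfun) \<Rightarrow> bool" where
  "invariant_pm_group Gr D \<longleftrightarrow> (\<forall>p q r. D (p \<otimes>\<^bsub>Gr\<^esub> r) (q \<otimes>\<^bsub>Gr\<^esub> r) = D p q
                                   \<and> D (r \<otimes>\<^bsub>Gr\<^esub> p) (r \<otimes>\<^bsub>Gr\<^esub> q) = D p q)"

definition odot :: "('a, 'b) monoid_scheme \<Rightarrow> (dfun \<Rightarrow> dfun \<Rightarrow> dfun) \<Rightarrow> ('a \<Rightarrow> dfun) \<Rightarrow> ('a \<Rightarrow> dfun) \<Rightarrow> ('a \<Rightarrow> dfun)" where
  "odot Gr tf f g = (\<lambda>x t. SUP yz\<in>{(y, z). y \<otimes>\<^bsub>Gr\<^esub> z = x}. tf (f (fst yz)) (g (snd yz)) t)"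

end

theory Submission
  imports Defs "HOL-Probability.Helly_Selection"
begin


lemma DP_distfun: "F \<in> DeltaPlus \<Longrightarrow> distfun F" by (simp add: DeltaPlus_def)
lemma DP_mono: "F \<in> DeltaPlus \<Longrightarrow> mono F" by (simp add: DeltaPlus_def distfun_def)
lemma DP_monoD: "F \<in> DeltaPlus \<Longrightarrow> s \<le> t \<Longrightarrow> F s \<le> F t" using DP_mono monoD by blast
lemma DP_ge0: "F \<in> DeltaPlus \<Longrightarrow> 0 \<le> F t" by (simp add: DeltaPlus_def distfun_def)
lemma DP_le1: "F \<in> DeltaPlus \<Longrightarrow> F t \<le> 1" by (simp add: DeltaPlus_def distfun_def)
lemma DP_inf: "F \<in> DeltaPlus \<Longrightarrow> F \<infinity> = 1" by (simp add: DeltaPlus_def distfun_def)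
lemma DP_minf: "F \<in> DeltaPlus \<Longrightarrow> F (-\<infinity>) = 0" by (simp add: DeltaPlus_def distfun_def)
lemma DP_zero: "F \<in> DeltaPlus \<Longrightarrow> F 0 = 0" by (simp add: DeltaPlus_def)
lemma DP_lcont: "F \<in> DeltaPlus \<Longrightarrow> ((\<lambda>s. F (ereal s)) \<longlongrightarrow> F (ereal x)) (at_left x)"
  by (simp add: DeltaPlus_def distfun_def)
lemma DP_nonpos: "F \<in> DeltaPlus \<Longrightarrow> t \<le> 0 \<Longrightarrow> F t = 0"
proof -
  assume a: "F \<in> DeltaPlus" "t \<le> 0"
  then have "F t \<le> F 0" by (rule DP_monoD)
  then show "F t = 0" using DP_zero[OF a(1)] DP_ge0[OF a(1), of t] by linarith
qed
lemma DP_mono_real: "F \<in> DeltaPlus \<Longrightarrow> mono (\<lambda>x. F (ereal x))"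
  by (auto simp: mono_def intro: DP_monoD)

lemma DP_I:
  assumes "mono F" "\<And>t. 0 \<le> F t" "\<And>t. F t \<le> 1"
    "\<And>x::real. ((\<lambda>s. F (ereal s)) \<longlongrightarrow> F (ereal x)) (at_left x)"
    "F (-\<infinity>) = 0" "F \<infinity> = 1" "F 0 = 0"
  shows "F \<in> DeltaPlus"
  using assms by (simp add: DeltaPlus_def distfun_def)

lemma H0_DP: "H0 \<in> DeltaPlus"
proof (rule DP_I)
  show "mono H0" by (auto simp: mono_def H0_def)
  fix x :: real
  show "((\<lambda>s. H0 (ereal s)) \<longlongrightarrow> H0 (ereal x)) (at_left x)"
  proof (cases "x \<le> 0")
    case True
    have "eventually (\<lambda>s. H0 (ereal s) = H0 (ereal x)) (at_left x)"
      using True by (auto simp: H0_def eventually_at_left_field intro!: exI[of _ "x - 1"])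
    then show ?thesis by (rule tendsto_eventually)
  next
    case False
    have "eventually (\<lambda>s. H0 (ereal s) = H0 (ereal x)) (at_left x)"
      using False by (auto simp: H0_def eventually_at_left_field intro!: exI[of _ "0"])
    then show ?thesis by (rule tendsto_eventually)
  qed
qed (auto simp: H0_def)

lemma Hinf_DP: "Hinf \<in> DeltaPlus"
  by (rule DP_I) (auto simp: mono_def Hinf_def)

lemma DP_le_H0: "F \<in> DeltaPlus \<Longrightarrow> F \<le> H0"
  by (auto simp: le_fun_def H0_def DP_nonpos DP_le1)

lemma Hinf_le: "F \<in> DeltaPlus \<Longrightarrow> Hinf \<le> F"
  by (auto simp: le_fun_def Hinf_def DP_inf DP_ge0)

lemma H0_ne_Hinf: "H0 \<noteq> Hinf"
proof
  assume "H0 = Hinf" then have "H0 1 = Hinf 1" by simp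
  then show False by (simp add: H0_def Hinf_def)
qed

lemma cont_pt_exists:
  fixes \<phi> \<psi> :: "real \<Rightarrow> real"
  assumes "mono \<phi>" "mono \<psi>" "s < t"
  shows "\<exists>u. s < u \<and> u < t \<and> isCont \<phi> u \<and> isCont \<psi> u"
proof -
  have "countable ({a. \<not> isCont \<phi> a} \<union> {a. \<not> isCont \<psi> a})"
    using mono_ctble_discont[OF assms(1)] mono_ctble_discont[OF assms(2)] by simp
  from open_minus_countable[OF this, of "{s<..<t}"] assms(3)
  show ?thesis by auto
qed

lemma wconv_const: "wconv Fl (\<lambda>n. F) F"
  by (simp add: wconv_def)

lemma wconv_compose:
  "wconv F2 S L \<Longrightarrow> filterlim r F2 F1 \<Longrightarrow> wconv F1 (\<lambda>i. S (r i)) L"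
  unfolding wconv_def using filterlim_compose by blast

lemma wconv_subseq:
  "wconv sequentially S L \<Longrightarrow> strict_mono r \<Longrightarrow> wconv sequentially (\<lambda>i. S (r i)) L"
  using wconv_compose filterlim_subseq by blast

lemma wconv_le:
  assumes FS: "wconv sequentially Fs F" and GS: "wconv sequentially Gs G"
    and F: "F \<in> DeltaPlus" and G: "G \<in> DeltaPlus"
    and ev: "eventually (\<lambda>n. Fs n \<le> Gs n) sequentially"
  shows "F \<le> G"
proof (rule le_funI)
  fix t :: ereal
  show "F t \<le> G t"
  proof (cases t)
    case (real r)
    have key: "F (ereal s) \<le> G (ereal r)" if "s < r" for s
    proof -
      obtain u where u: "s < u" "u < r" "isCont (\<lambda>x. F (ereal x)) u" "isCont (\<lambda>x. G (ereal x)) u"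
        using cont_pt_exists[OF DP_mono_real[OF F] DP_mono_real[OF G] \<open>s < r\<close>] by blast
      have "F (ereal u) \<le> G (ereal u)"
      proof (rule tendsto_le[OF _ _ _ ])
        show "((\<lambda>n. Gs n (ereal u)) \<longlongrightarrow> G (ereal u)) sequentially" using GS u by (simp add: wconv_def)
        show "((\<lambda>n. Fs n (ereal u)) \<longlongrightarrow> F (ereal u)) sequentially" using FS u by (simp add: wconv_def)
        show "eventually (\<lambda>n. Fs n (ereal u) \<le> Gs n (ereal u)) sequentially"
          using ev by eventually_elim (simp add: le_fun_def)
      qed simp
      moreover have "F (ereal s) \<le> F (ereal u)" using F u by (intro DP_monoD) auto
      moreover have "G (ereal u) \<le> G (ereal r)" using G u by (intro DP_monoD) auto
      ultimately show ?thesis by linarith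
    qed
    have "F (ereal r) \<le> G (ereal r)"
    proof (rule tendsto_upperbound[OF DP_lcont[OF F]])
      show "eventually (\<lambda>s. F (ereal s) \<le> G (ereal r)) (at_left r)"
        using key eventually_at_left_field[of _ r] by (auto intro!: exI[of _ "r - 1"])
    qed (simp add: trivial_limit_at_left_real)
    then show ?thesis using real by simp
  next
    case PInf then show ?thesis using F G by (simp add: DP_inf)
  next
    case MInf then show ?thesis using F G by (simp add: DP_minf)
  qed
qed

lemma wconv_unique:
  assumes "wconv sequentially Fs F" "wconv sequentially Fs G" "F \<in> DeltaPlus" "G \<in> DeltaPlus"
  shows "F = G"
  using wconv_le[OF assms(1,2,3,4)] wconv_le[OF assms(2,1,4,3)] by (auto intro: antisym)

lemma wconv_lb:
  assumes FS: "wconv sequentially Fs F" and F: "F \<in> DeltaPlus" and Fs: "\<And>n. Fs n \<in> DeltaPlus"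
    and ev: "eventually (\<lambda>n. c \<le> Fs n (ereal s)) sequentially" and st: "s < t"
  shows "c \<le> F (ereal t)"
proof -
  obtain u where u: "s < u" "u < t" "isCont (\<lambda>x. F (ereal x)) u"
    using cont_pt_exists[OF DP_mono_real[OF F] DP_mono_real[OF F] st] by blast
  have "c \<le> F (ereal u)"
  proof (rule tendsto_lowerbound)
    show "((\<lambda>n. Fs n (ereal u)) \<longlongrightarrow> F (ereal u)) sequentially" using FS u by (simp add: wconv_def)
    have mon: "\<And>n. Fs n (ereal s) \<le> Fs n (ereal u)" using Fs u by (intro DP_monoD) auto
    show "eventually (\<lambda>n. c \<le> Fs n (ereal u)) sequentially"
      using ev by eventually_elim (use mon order_trans in blast)
  qed simp
  also have "\<dots> \<le> F (ereal t)" using F u by (intro DP_monoD) auto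
  finally show ?thesis .
qed

lemma tendsto_one_iff:
  assumes "\<And>n. f n \<le> (1::real)"
  shows "(f \<longlongrightarrow> 1) Fl \<longleftrightarrow> (\<forall>e>0. eventually (\<lambda>n. f n > 1 - e) Fl)"
proof
  assume "(f \<longlongrightarrow> 1) Fl"
  then show "\<forall>e>0. eventually (\<lambda>n. f n > 1 - e) Fl"
    using order_tendstoD(1)[of f 1 Fl] by force
next
  assume H: "\<forall>e>0. eventually (\<lambda>n. f n > 1 - e) Fl"
  show "(f \<longlongrightarrow> 1) Fl"
  proof (rule order_tendstoI)
    fix a :: real assume "a < 1" then show "eventually (\<lambda>n. a < f n) Fl"
      using H[rule_format, of "1 - a"] by simp
  next
    fix a :: real assume "1 < a" then show "eventually (\<lambda>n. f n < a) Fl"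
      using assms by (auto intro: always_eventually le_less_trans)
  qed
qed

lemma wconv_H0_iff:
  assumes "\<And>n. Fs n \<in> DeltaPlus"
  shows "wconv Fl Fs H0 \<longleftrightarrow> (\<forall>t>0. \<forall>e>0. eventually (\<lambda>n. Fs n (ereal t) > 1 - e) Fl)"
proof
  assume W: "wconv Fl Fs H0"
  show "\<forall>t>0. \<forall>e>0. eventually (\<lambda>n. Fs n (ereal t) > 1 - e) Fl"
  proof (intro allI impI)
    fix t e :: real assume t: "t > 0" and e: "e > 0"
    have "isCont (\<lambda>x. H0 (ereal x)) t"
    proof -
      have "eventually (\<lambda>x. H0 (ereal x) = 1) (nhds t)"
        using eventually_nhds_in_open[of "{0<..}" t] t
        by (auto elim!: eventually_mono simp: H0_def)
      then have "isCont (\<lambda>x. H0 (ereal x)) t = isCont (\<lambda>x. 1::real) t"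
        by (rule isCont_cong)
      then show ?thesis by simp
    qed
    with W have "((\<lambda>n. Fs n (ereal t)) \<longlongrightarrow> H0 (ereal t)) Fl"
      by (simp add: wconv_def)
    then have "((\<lambda>n. Fs n (ereal t)) \<longlongrightarrow> 1) Fl"
      using t by (simp add: H0_def)
    then show "eventually (\<lambda>n. Fs n (ereal t) > 1 - e) Fl"
      using tendsto_one_iff[of "\<lambda>n. Fs n (ereal t)"] assms DP_le1 e by blast
  qed
next
  assume H: "\<forall>t>0. \<forall>e>0. eventually (\<lambda>n. Fs n (ereal t) > 1 - e) Fl"
  show "wconv Fl Fs H0"
    unfolding wconv_def
  proof (intro allI impI)
    fix t :: real
    show "((\<lambda>n. Fs n (ereal t)) \<longlongrightarrow> H0 (ereal t)) Fl"
    proof (cases "t \<le> 0")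
      case True
      then show ?thesis using assms by (simp add: H0_def DP_nonpos)
    next
      case False
      then show ?thesis using H tendsto_one_iff[of "\<lambda>n. Fs n (ereal t)"] assms DP_le1
        by (simp add: H0_def)
    qed
  qed
qed


lemma helly_DP:
  fixes Fs :: "nat \<Rightarrow> dfun"
  assumes Fs: "\<And>n. Fs n \<in> DeltaPlus"
  shows "\<exists>(r::nat\<Rightarrow>nat) L. strict_mono r \<and> L \<in> DeltaPlus \<and> wconv sequentially (\<lambda>i. Fs (r i)) L"
proof -
  define f where "f n x = 1 - Fs n (ereal (-x))" for n x
  have rcont: "continuous (at_right x) (f n)" for n x
  proof -
    have "((\<lambda>s. Fs n (ereal s)) \<longlongrightarrow> Fs n (ereal (-x))) (at_left (-x))"
      using DP_lcont[OF Fs] by blast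
    then have "((\<lambda>s. Fs n (ereal s)) \<longlongrightarrow> Fs n (ereal (-x))) (filtermap uminus (at_right x))"
      using at_left_minus[of "-x"] by simp
    then have "((\<lambda>y. Fs n (ereal (-y))) \<longlongrightarrow> Fs n (ereal (-x))) (at_right x)"
      by (simp add: filterlim_filtermap)
    then have "(f n \<longlongrightarrow> f n x) (at_right x)"
      unfolding f_def by (intro tendsto_intros)
    then show ?thesis by (simp add: continuous_within)
  qed
  have mono: "mono (f n)" for n
  proof (rule monoI)
    fix x y :: real assume "x \<le> y"
    then have "Fs n (ereal (-y)) \<le> Fs n (ereal (-x))" by (intro DP_monoD[OF Fs]) simp
    then show "f n x \<le> f n y" by (simp add: f_def)
  qed
  have bdd: "\<bar>f n x\<bar> \<le> 1" for n x
    using DP_ge0[OF Fs, of n "ereal (-x)"] DP_le1[OF Fs, of n "ereal (-x)"] by (simp add: f_def abs_le_iff)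
  obtain s F' where s: "strict_mono s" and F'rc: "\<forall>x. continuous (at_right x) F'"
    and F'm: "mono F'" and F'b: "\<forall>x. \<bar>F' x\<bar> \<le> 1"
    and F'c: "\<forall>x. isCont F' x \<longrightarrow> (\<lambda>n. f (s n) x) \<longlonglongrightarrow> F' x"
    using Helly_selection[of f 1, OF rcont mono bdd] by blast
  have cval: "0 \<le> F' y \<and> F' y \<le> 1" if "isCont F' y" for y
  proof -
    have lim: "(\<lambda>n. f (s n) y) \<longlonglongrightarrow> F' y" using F'c that by blast
    have ev0: "\<forall>n. 0 \<le> f (s n) y" using DP_le1[OF Fs] by (simp add: f_def)
    have ev1: "\<forall>n. f (s n) y \<le> 1" using DP_ge0[OF Fs] by (simp add: f_def)
    have "0 \<le> F' y" by (rule tendsto_lowerbound[OF lim always_eventually[OF ev0]]) simp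
    moreover have "F' y \<le> 1" by (rule tendsto_upperbound[OF lim always_eventually[OF ev1]]) simp
    ultimately show ?thesis by simp
  qed
  have F'0: "0 \<le> F' x" for x
  proof -
    obtain y where "x - 1 < y" "y < x" "isCont F' y"
      using cont_pt_exists[OF F'm F'm, of "x - 1" x] by auto
    then have "F' y \<le> F' x" using monoD[OF F'm, of y x] by simp
    then show ?thesis using cval[of y] \<open>isCont F' y\<close> by linarith
  qed
  have F'1: "F' x \<le> 1" for x
  proof -
    obtain y where "x < y" "y < x + 1" "isCont F' y"
      using cont_pt_exists[OF F'm F'm, of x "x + 1"] by auto
    then have "F' x \<le> F' y" using monoD[OF F'm, of x y] by simp
    then show ?thesis using cval[of y] \<open>isCont F' y\<close> by linarith
  qed
  have F'pos: "F' x = 1" if x0: "x > 0" for x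
  proof -
    obtain y where y: "0 < y" "y < x" "isCont F' y"
      using cont_pt_exists[OF F'm F'm x0] by auto
    have l1: "(\<lambda>n. f (s n) y) \<longlonglongrightarrow> F' y" using F'c y by blast
    have "f (s n) y = 1" for n using y DP_nonpos[OF Fs[of "s n"], of "ereal (-y)"] by (simp add: f_def)
    then have l2: "(\<lambda>n. f (s n) y) \<longlonglongrightarrow> 1" by simp
    have "F' y = 1" using LIMSEQ_unique[OF l1 l2] .
    moreover have "F' y \<le> F' x" using monoD[OF F'm, of y x] y by simp
    ultimately show ?thesis using F'1[of x] by linarith
  qed
  have F'zero: "F' 0 = 1"
  proof -
    have "(F' \<longlongrightarrow> F' 0) (at_right 0)" using F'rc by (simp add: continuous_within)
    moreover have "(F' \<longlongrightarrow> 1) (at_right (0::real))"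
      by (rule tendsto_eventually) (auto simp: eventually_at_right_field intro!: exI[of _ 1] F'pos)
    ultimately show ?thesis using tendsto_unique[OF trivial_limit_at_right_real] by blast
  qed
  define L where "L e = (if e = \<infinity> then 1 else if e = -\<infinity> then 0 else 1 - F' (- real_of_ereal e))" for e
  have Lr: "L (ereal t) = 1 - F' (-t)" for t by (simp add: L_def)
  have LDP: "L \<in> DeltaPlus"
  proof (rule DP_I)
    show "mono L"
    proof (rule monoI)
      fix a b :: ereal assume "a \<le> b"
      have mm: "F' (-q) \<le> F' (-p)" if "p \<le> q" for p q using monoD[OF F'm, of "-q" "-p"] that by simp
      show "L a \<le> L b"
      proof (cases a)
        case (real p)
        show ?thesis
        proof (cases b)
          case (real q)
          then show ?thesis using \<open>a = ereal p\<close> \<open>a \<le> b\<close> mm[of p q] by (simp add: L_def)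
        next
          case PInf then show ?thesis using \<open>a = ereal p\<close> F'0[of "-p"] by (simp add: L_def)
        next
          case MInf then show ?thesis using \<open>a = ereal p\<close> \<open>a \<le> b\<close> by simp
        qed
      next
        case PInf then show ?thesis using \<open>a \<le> b\<close> by simp
      next
        case MInf then show ?thesis
          by (cases b) (simp_all add: L_def F'1)
      qed
    qed
    show "0 \<le> L t" for t by (cases t) (auto simp: L_def F'1)
    show "L t \<le> 1" for t by (cases t) (auto simp: L_def F'0)
    show "L (-\<infinity>) = 0" "L \<infinity> = 1" by (auto simp: L_def)
    show "L 0 = 0" by (simp add: zero_ereal_def L_def F'zero)
    fix x :: real
    have "(F' \<longlongrightarrow> F' (-x)) (at_right (-x))" using F'rc by (simp add: continuous_within)
    then have "(F' \<longlongrightarrow> F' (-x)) (filtermap uminus (at_left x))"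
      using at_right_minus[of "-x"] by simp
    then have "((\<lambda>y. F' (-y)) \<longlongrightarrow> F' (-x)) (at_left x)"
      by (simp add: filterlim_filtermap)
    then have "((\<lambda>y. 1 - F' (-y)) \<longlongrightarrow> 1 - F' (-x)) (at_left x)"
      by (intro tendsto_intros)
    then show "((\<lambda>s. L (ereal s)) \<longlongrightarrow> L (ereal x)) (at_left x)" by (simp add: Lr)
  qed
  have "wconv sequentially (\<lambda>i. Fs (s i)) L"
    unfolding wconv_def
  proof (intro allI impI)
    fix t :: real assume ct: "isCont (\<lambda>x. L (ereal x)) t"
    have "isCont (\<lambda>y. L (ereal (- y))) (-t)"
      by (rule isCont_o2[where f = uminus]) (use ct in auto)
    then have "isCont (\<lambda>y. 1 - L (ereal (- y))) (-t)" by (intro continuous_intros)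
    then have "isCont F' (-t)" by (simp add: Lr)
    then have "(\<lambda>n. f (s n) (-t)) \<longlonglongrightarrow> F' (-t)" using F'c by blast
    then have "(\<lambda>n. 1 - f (s n) (-t)) \<longlonglongrightarrow> 1 - F' (-t)" by (intro tendsto_intros)
    then show "(\<lambda>n. Fs (s n) (ereal t)) \<longlonglongrightarrow> L (ereal t)" by (simp add: f_def Lr)
  qed
  then show ?thesis using s LDP by blast
qed


lemma wconv_subseq_principle:
  assumes H: "\<And>r::nat\<Rightarrow>nat. strict_mono r \<Longrightarrow> \<exists>r'::nat\<Rightarrow>nat. strict_mono r' \<and> wconv sequentially (\<lambda>i. Fs (r (r' i))) L"
  shows "wconv sequentially Fs L"
  unfolding wconv_def
proof (intro allI impI)
  fix t :: real assume ct: "isCont (\<lambda>x. L (ereal x)) t"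
  show "(\<lambda>n. Fs n (ereal t)) \<longlonglongrightarrow> L (ereal t)"
  proof (rule ccontr)
    assume nt: "\<not> ?thesis"
    have "\<not> (\<forall>e>0. eventually (\<lambda>n. dist (Fs n (ereal t)) (L (ereal t)) < e) sequentially)"
    proof
      assume a: "\<forall>e>0. eventually (\<lambda>n. dist (Fs n (ereal t)) (L (ereal t)) < e) sequentially"
      have "(\<lambda>n. Fs n (ereal t)) \<longlonglongrightarrow> L (ereal t)" unfolding tendsto_iff by (rule a)
      then show False using nt by simp
    qed
    then obtain e where e: "e > 0" and ne: "\<not> eventually (\<lambda>n. dist (Fs n (ereal t)) (L (ereal t)) < e) sequentially"
      by auto
    have "infinite {n. \<not> dist (Fs n (ereal t)) (L (ereal t)) < e}"
      using ne by (simp add: cofinite_eq_sequentially[symmetric] eventually_cofinite)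
    from infinite_enumerate[OF this] obtain r :: "nat \<Rightarrow> nat" where r: "strict_mono r"
      "\<forall>n. r n \<in> {n. \<not> dist (Fs n (ereal t)) (L (ereal t)) < e}"
      by blast
    obtain r' where r': "strict_mono r'" "wconv sequentially (\<lambda>i. Fs (r (r' i))) L"
      using H[OF r(1)] by blast
    then have lim: "(\<lambda>i. Fs (r (r' i)) (ereal t)) \<longlonglongrightarrow> L (ereal t)" using ct by (simp add: wconv_def)
    have "eventually (\<lambda>i. dist (Fs (r (r' i)) (ereal t)) (L (ereal t)) < e) sequentially"
      by (rule tendstoD[OF lim e])
    then obtain N where "dist (Fs (r (r' N)) (ereal t)) (L (ereal t)) < e"
      unfolding eventually_sequentially by blast
    moreover have "\<not> dist (Fs (r (r' N)) (ereal t)) (L (ereal t)) < e" using r(2) by simp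
    ultimately show False by simp
  qed
qed

lemma SUP_DP:
  assumes I: "I \<noteq> {}" and h: "\<And>i. i \<in> I \<Longrightarrow> h i \<in> DeltaPlus"
  shows "(\<lambda>t. SUP i\<in>I. h i t) \<in> DeltaPlus"
proof -
  define S where "S t = (SUP i\<in>I. h i t)" for t
  have bdd: "bdd_above ((\<lambda>i. h i t) ` I)" for t
    using h DP_le1 by (auto intro!: bdd_aboveI[of _ 1])
  have up: "h i t \<le> S t" if "i \<in> I" for i t
    unfolding S_def by (rule cSUP_upper[OF that bdd])
  have least: "S t \<le> M" if "\<And>i. i \<in> I \<Longrightarrow> h i t \<le> M" for t M
    unfolding S_def using I that by (rule cSUP_least)
  obtain i0' where i0': "i0' \<in> I" using I by blast
  have const: "(\<And>i. i \<in> I \<Longrightarrow> h i t = c) \<Longrightarrow> S t = c" for t c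
  proof -
    assume c: "\<And>i. i \<in> I \<Longrightarrow> h i t = c"
    have "S t \<le> c" using least[of t c] c by simp
    moreover have "c \<le> S t" using up[OF i0', of t] c[OF i0'] by simp
    ultimately show "S t = c" by simp
  qed
  obtain i0 where i0: "i0 \<in> I" using I by blast
  have monoS: "mono S"
  proof (rule monoI)
    fix a b :: ereal assume "a \<le> b"
    show "S a \<le> S b"
    proof (rule least)
      fix i assume i: "i \<in> I"
      have "h i a \<le> h i b" using DP_monoD[OF h[OF i] \<open>a \<le> b\<close>] .
      then show "h i a \<le> S b" using up[OF i, of b] by linarith
    qed
  qed
  have "S \<in> DeltaPlus"
  proof (rule DP_I)
    show "mono S" by (rule monoS)
    show "0 \<le> S t" for t using up[OF i0, of t] DP_ge0[OF h[OF i0], of t] by linarith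
    show "S t \<le> 1" for t by (rule least) (use DP_le1 h in blast)
    show "S (-\<infinity>) = 0" by (rule const) (use DP_minf h in blast)
    show "S \<infinity> = 1" by (rule const) (use DP_inf h in blast)
    show "S 0 = 0" by (rule const) (use DP_zero h in blast)
    fix x :: real
    show "((\<lambda>s. S (ereal s)) \<longlongrightarrow> S (ereal x)) (at_left x)"
    proof (rule order_tendstoI)
      fix a assume "a < S (ereal x)"
      then obtain i where i: "i \<in> I" "a < h i (ereal x)"
        unfolding S_def using less_cSUP_iff[OF I bdd] by blast
      have "eventually (\<lambda>s. a < h i (ereal s)) (at_left x)"
        using order_tendstoD(1)[OF DP_lcont[OF h[OF i(1)]] i(2)] .
      then show "eventually (\<lambda>s. a < S (ereal s)) (at_left x)"
      proof eventually_elim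
        case (elim s) then show ?case using up[OF i(1), of "ereal s"] by linarith
      qed
    next
      fix a assume a: "S (ereal x) < a"
      have "eventually (\<lambda>s. s < x) (at_left x)"
        by (auto simp: eventually_at_left_field intro!: exI[of _ "x - 1"])
      then show "eventually (\<lambda>s. S (ereal s) < a) (at_left x)"
      proof eventually_elim
        case (elim s)
        then have "S (ereal s) \<le> S (ereal x)" using monoD[OF monoS, of "ereal s" "ereal x"] by simp
        then show ?case using a by linarith
      qed
    qed
  qed
  moreover have "S = (\<lambda>t. SUP i\<in>I. h i t)" by (rule ext) (simp add: S_def)
  ultimately show ?thesis by simp
qed





locale pmc =
  fixes D :: "'a \<Rightarrow> 'a \<Rightarrow> dfun" and tf :: "dfun \<Rightarrow> dfun \<Rightarrow> dfun"
  assumes pm: "pm_space UNIV D tf" and cont: "tf_continuous tf"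
begin

lemma TF: "triangle_function tf" using pm by (simp add: pm_space_def)
lemma tf_DP: "F \<in> DeltaPlus \<Longrightarrow> L \<in> DeltaPlus \<Longrightarrow> tf F L \<in> DeltaPlus"
  using TF unfolding triangle_function_def by blast
lemma tf_comm: "F \<in> DeltaPlus \<Longrightarrow> L \<in> DeltaPlus \<Longrightarrow> tf F L = tf L F"
  using TF unfolding triangle_function_def by blast
lemma tf_assoc: "F \<in> DeltaPlus \<Longrightarrow> L \<in> DeltaPlus \<Longrightarrow> K \<in> DeltaPlus \<Longrightarrow> tf (tf F L) K = tf F (tf L K)"
  using TF unfolding triangle_function_def by blast
lemma tf_mono1: "F \<in> DeltaPlus \<Longrightarrow> F' \<in> DeltaPlus \<Longrightarrow> L \<in> DeltaPlus \<Longrightarrow> F \<le> F' \<Longrightarrow> tf F L \<le> tf F' L"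
  using TF unfolding triangle_function_def by blast
lemma tf_mono2: "F \<in> DeltaPlus \<Longrightarrow> F' \<in> DeltaPlus \<Longrightarrow> L \<in> DeltaPlus \<Longrightarrow> F \<le> F' \<Longrightarrow> tf L F \<le> tf L F'"
  using TF unfolding triangle_function_def by blast
lemma tf_H0: "F \<in> DeltaPlus \<Longrightarrow> tf F H0 = F"
  using TF unfolding triangle_function_def by blast
lemma tf_H0l: "F \<in> DeltaPlus \<Longrightarrow> tf H0 F = F"
  by (simp add: tf_comm[OF H0_DP] tf_H0)
lemma tf_le_left: "F \<in> DeltaPlus \<Longrightarrow> L \<in> DeltaPlus \<Longrightarrow> tf F L \<le> F"
proof -
  assume F: "F \<in> DeltaPlus" and L: "L \<in> DeltaPlus"
  have "tf F L \<le> tf F H0" by (rule tf_mono2[OF L H0_DP F DP_le_H0[OF L]])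
  then show ?thesis by (simp add: tf_H0[OF F])
qed

lemma D_DP: "D p q \<in> DeltaPlus" using pm by (simp add: pm_space_def)
lemma D_H0: "D p q = H0 \<longleftrightarrow> p = q" using pm by (simp add: pm_space_def)
lemma D_self: "D p p = H0" using D_H0 by simp
lemma D_sym: "D p q = D q p" using pm by (simp add: pm_space_def)
lemma D_tri: "tf (D p q) (D q r) \<le> D p r" using pm by (simp add: pm_space_def)

lemma tf_cont:
  assumes "\<And>n. Fs n \<in> DeltaPlus" "\<And>n. Ls n \<in> DeltaPlus" "F \<in> DeltaPlus" "L \<in> DeltaPlus"
    "wconv sequentially Fs F" "wconv sequentially Ls L"
  shows "wconv sequentially (\<lambda>n. tf (Fs n) (Ls n)) (tf F L)"
  using cont assms unfolding tf_continuous_def by blast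

lemma Lip_DP: "f \<in> LipS D tf \<Longrightarrow> f x \<in> DeltaPlus" by (simp add: LipS_def)
lemma Lip_le: "f \<in> LipS D tf \<Longrightarrow> tf (D x y) (f y) \<le> f x" by (simp add: LipS_def)

lemma PiG_Lip: "f \<in> PiG D tf \<Longrightarrow> f \<in> LipS D tf" by (simp add: PiG_def)
lemma PiG_E:
  assumes "f \<in> PiG D tf"
  obtains b where "pm_cauchy UNIV D b" "\<And>x. wconv sequentially (\<lambda>n. D (b n) x) (f x)"
  using assms by (auto simp: PiG_def)

lemma delta_Lip: "pm_delta D a \<in> LipS D tf"
  by (simp add: LipS_def pm_delta_def D_DP D_tri)

lemma delta_PiG: "pm_delta D a \<in> PiG D tf"
proof -
  have e: "(\<lambda>(n::nat, p::nat). D a a) = (\<lambda>_. H0)" by (auto simp: D_self)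
  have "pm_cauchy UNIV D (\<lambda>n. a)"
    unfolding pm_cauchy_def by (simp add: e wconv_const)
  moreover have "\<forall>x. wconv sequentially (\<lambda>n. D ((\<lambda>n. a) n) x) (pm_delta D a x)"
    by (simp add: pm_delta_def D_sym wconv_const)
  ultimately show ?thesis using delta_Lip unfolding PiG_def by blast
qed

lemma DD_DP: "(\<And>x. f x \<in> DeltaPlus) \<Longrightarrow> (\<And>x. g x \<in> DeltaPlus) \<Longrightarrow> DD tf f g \<in> DeltaPlus"
  unfolding DD_def by (rule SUP_DP) (auto intro: tf_DP)

lemma DD_comm: "(\<And>x. f x \<in> DeltaPlus) \<Longrightarrow> (\<And>x. g x \<in> DeltaPlus) \<Longrightarrow> DD tf f g = DD tf g f"
proof -
  assume f: "\<And>x. f x \<in> DeltaPlus" and g: "\<And>x. g x \<in> DeltaPlus"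
  have "\<And>x. tf (f x) (g x) = tf (g x) (f x)" by (rule tf_comm[OF f g])
  then show ?thesis unfolding DD_def by simp
qed

lemma DD_upper:
  assumes "\<And>x. f x \<in> DeltaPlus" "\<And>x. g x \<in> DeltaPlus"
  shows "tf (f x) (g x) \<le> DD tf f g"
proof (rule le_funI)
  fix t
  have "bdd_above ((\<lambda>x. tf (f x) (g x) t) ` UNIV)"
    using assms tf_DP DP_le1 by (auto intro!: bdd_aboveI[of _ 1])
  then show "tf (f x) (g x) t \<le> DD tf f g t"
    unfolding DD_def by (rule cSUP_upper[OF UNIV_I])
qed

lemma DD_least:
  assumes "\<And>x. tf (f x) (g x) \<le> H"
  shows "DD tf f g \<le> H"
proof (rule le_funI)
  fix t
  show "DD tf f g t \<le> H t"
    unfolding DD_def by (rule cSUP_least) (use assms in \<open>auto simp: le_fun_def\<close>)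
qed

lemma DD_delta:
  assumes f: "f \<in> LipS D tf"
  shows "DD tf f (pm_delta D b) = f b"
proof (rule antisym)
  show "DD tf f (pm_delta D b) \<le> f b"
  proof (rule DD_least)
    fix x
    have "tf (f x) (pm_delta D b x) = tf (D b x) (f x)"
      by (simp add: pm_delta_def D_sym[of x b] tf_comm Lip_DP[OF f] D_DP)
    also have "\<dots> \<le> f b" by (rule Lip_le[OF f])
    finally show "tf (f x) (pm_delta D b x) \<le> f b" .
  qed
  have "tf (f b) (pm_delta D b b) \<le> DD tf f (pm_delta D b)"
    by (rule DD_upper) (auto simp: Lip_DP[OF f] pm_delta_def D_DP)
  then show "f b \<le> DD tf f (pm_delta D b)"
    by (simp add: pm_delta_def D_self tf_H0 Lip_DP[OF f])
qed

lemma DD_delta_delta: "DD tf (pm_delta D a) (pm_delta D b) = D a b"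
proof -
  have "DD tf (pm_delta D a) (pm_delta D b) = pm_delta D a b" by (rule DD_delta[OF delta_Lip])
  then show ?thesis by (simp add: pm_delta_def D_sym)
qed

lemma cauchy_H0:
  assumes "pm_cauchy UNIV D b"
  shows "\<forall>t>0. \<forall>e>0. eventually (\<lambda>(n, p). D (b n) (b p) (ereal t) > 1 - e) (sequentially \<times>\<^sub>F sequentially)"
proof -
  have W: "wconv (sequentially \<times>\<^sub>F sequentially) (\<lambda>(n, p). D (b n) (b p)) H0"
    using assms by (simp add: pm_cauchy_def)
  have "\<And>x. (\<lambda>(n, p). D (b n) (b p)) x \<in> DeltaPlus" by (simp add: case_prod_beta D_DP)
  from wconv_H0_iff[of "\<lambda>(n, p). D (b n) (b p)", OF this] W
  show ?thesis by (simp add: case_prod_beta case_prod_beta')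
qed

lemma self_lim:
  assumes C: "pm_cauchy UNIV D b" and gb: "\<And>x. wconv sequentially (\<lambda>n. D (b n) x) (g x)"
    and g: "\<And>x. g x \<in> DeltaPlus"
  shows "wconv sequentially (\<lambda>m. g (b m)) H0"
proof -
  have "\<forall>t>0. \<forall>e>0. eventually (\<lambda>m. g (b m) (ereal t) > 1 - e) sequentially"
  proof (intro allI impI)
    fix t e :: real assume t: "t > 0" and e: "e > 0"
    have "eventually (\<lambda>(n, p). D (b n) (b p) (ereal (t/2)) > 1 - e/2) (sequentially \<times>\<^sub>F sequentially)"
      using cauchy_H0[OF C] t e by simp
    then obtain N where N: "\<And>m n. m \<ge> N \<Longrightarrow> n \<ge> N \<Longrightarrow> D (b n) (b m) (ereal (t/2)) > 1 - e/2"
      unfolding eventually_prod_sequentially by auto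
    have lbN: "1 - e/2 \<le> g (b m) (ereal t)" if m: "m \<ge> N" for m
    proof (rule wconv_lb[OF gb g D_DP])
      show "eventually (\<lambda>n. 1 - e/2 \<le> D (b n) (b m) (ereal (t/2))) sequentially"
        unfolding eventually_sequentially using N[OF m] by (auto intro!: exI[of _ N] less_imp_le)
      show "t/2 < t" using t by simp
    qed
    show "eventually (\<lambda>m. g (b m) (ereal t) > 1 - e) sequentially"
      unfolding eventually_sequentially
    proof (intro exI allI impI)
      fix m assume "N \<le> m"
      from lbN[OF this] e show "g (b m) (ereal t) > 1 - e" by linarith
    qed
  qed
  then show ?thesis using wconv_H0_iff[of "\<lambda>m. g (b m)"] g by blast
qed

lemma DD_lim:
  assumes f: "f \<in> LipS D tf" and C: "pm_cauchy UNIV D b"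
    and gb: "\<And>x. wconv sequentially (\<lambda>n. D (b n) x) (g x)" and g: "\<And>x. g x \<in> DeltaPlus"
    and r: "filterlim r sequentially sequentially" and F: "F \<in> DeltaPlus"
    and conv: "wconv sequentially (\<lambda>i. f (b (r i))) F"
  shows "DD tf f g = F"
proof (rule antisym)
  show "DD tf f g \<le> F"
  proof (rule DD_least)
    fix x
    show "tf (f x) (g x) \<le> F"
    proof (rule wconv_le[OF _ conv tf_DP[OF Lip_DP[OF f] g] F])
      show "wconv sequentially (\<lambda>i. tf (f x) (D (b (r i)) x)) (tf (f x) (g x))"
        by (rule tf_cont) (auto simp: Lip_DP[OF f] D_DP g wconv_const intro: wconv_compose[OF gb r])
      show "eventually (\<lambda>i. tf (f x) (D (b (r i)) x) \<le> f (b (r i))) sequentially"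
        by (intro always_eventually allI)
           (simp add: tf_comm[OF Lip_DP[OF f] D_DP] Lip_le[OF f])
    qed
  qed
  show "F \<le> DD tf f g"
  proof (rule wconv_le[OF _ wconv_const _ DD_DP])
    have sl: "wconv sequentially (\<lambda>i. g (b (r i))) H0"
      using wconv_compose[OF self_lim[OF C gb g] r] .
    have "wconv sequentially (\<lambda>i. tf (f (b (r i))) (g (b (r i)))) (tf F H0)"
      by (rule tf_cont[OF Lip_DP[OF f] g F H0_DP conv sl])
    then show "wconv sequentially (\<lambda>i. tf (f (b (r i))) (g (b (r i)))) F"
      by (simp add: tf_H0 F)
    show "eventually (\<lambda>i. tf (f (b (r i))) (g (b (r i))) \<le> DD tf f g) sequentially"
      by (intro always_eventually allI DD_upper Lip_DP[OF f] g)
  qed (auto simp: tf_DP Lip_DP[OF f] g F)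
qed

lemma DD_sublim:
  assumes f: "f \<in> LipS D tf" and C: "pm_cauchy UNIV D b"
    and gb: "\<And>x. wconv sequentially (\<lambda>n. D (b n) x) (g x)" and g: "\<And>x. g x \<in> DeltaPlus"
    and r: "strict_mono (r::nat\<Rightarrow>nat)"
  shows "\<exists>r'::nat\<Rightarrow>nat. strict_mono r' \<and> wconv sequentially (\<lambda>i. f (b (r (r' i)))) (DD tf f g)"
proof -
  obtain r' L where r': "strict_mono r'" and L: "L \<in> DeltaPlus"
    and conv: "wconv sequentially (\<lambda>i. f (b (r (r' i)))) L"
    using helly_DP[of "\<lambda>i. f (b (r i))"] Lip_DP[OF f] by blast
  have "strict_mono (\<lambda>i. r (r' i))" using r r' by (simp add: strict_mono_def)
  then have "DD tf f g = L"
    using DD_lim[OF f C gb g filterlim_subseq L conv] by blast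
  then show ?thesis using r' conv by blast
qed

lemma DD_self:
  assumes "g \<in> PiG D tf"
  shows "DD tf g g = H0"
proof -
  obtain b where C: "pm_cauchy UNIV D b" and gb: "\<And>x. wconv sequentially (\<lambda>n. D (b n) x) (g x)"
    using assms by (rule PiG_E) blast
  have g: "\<And>x. g x \<in> DeltaPlus" using Lip_DP[OF PiG_Lip[OF assms]] .
  show ?thesis
    using DD_lim[OF PiG_Lip[OF assms] C gb g filterlim_ident H0_DP] self_lim[OF C gb g] by simp
qed

lemma DD_H0_half:
  assumes f: "f \<in> LipS D tf" and g: "g \<in> PiG D tf" and H: "DD tf f g = H0"
  shows "g x \<le> f x"
proof -
  obtain b where C: "pm_cauchy UNIV D b" and gb: "\<And>x. wconv sequentially (\<lambda>n. D (b n) x) (g x)"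
    using g by (rule PiG_E) blast
  have gD: "\<And>x. g x \<in> DeltaPlus" using Lip_DP[OF PiG_Lip[OF g]] .
  obtain r' :: "nat \<Rightarrow> nat" where r': "strict_mono r'" and conv: "wconv sequentially (\<lambda>i. f (b (r' i))) H0"
    using DD_sublim[OF f C gb gD, of "\<lambda>i. i"] H by (auto simp: strict_mono_def)
  show ?thesis
  proof (rule wconv_le[OF _ wconv_const gD Lip_DP[OF f]])
    have "wconv sequentially (\<lambda>i. tf (D x (b (r' i))) (f (b (r' i)))) (tf (g x) H0)"
      by (rule tf_cont) (auto simp: D_DP gD Lip_DP[OF f] H0_DP conv D_sym[of x] intro: wconv_subseq[OF gb r'])
    then show "wconv sequentially (\<lambda>i. tf (D x (b (r' i))) (f (b (r' i)))) (g x)"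
      by (simp add: tf_H0 gD)
    show "eventually (\<lambda>i. tf (D x (b (r' i))) (f (b (r' i))) \<le> f x) sequentially"
      by (intro always_eventually allI Lip_le[OF f])
  qed
qed

lemma DD_H0_eq:
  assumes f: "f \<in> PiG D tf" and g: "g \<in> PiG D tf" and H: "DD tf f g = H0"
  shows "f = g"
proof -
  have fD: "\<And>x. f x \<in> DeltaPlus" and gD: "\<And>x. g x \<in> DeltaPlus"
    using Lip_DP[OF PiG_Lip[OF f]] Lip_DP[OF PiG_Lip[OF g]] by auto
  have H': "DD tf g f = H0" using H DD_comm[of f g, OF fD gD] by simp
  show ?thesis
  proof (rule ext, rule antisym)
    fix x
    show "f x \<le> g x" using DD_H0_half[OF PiG_Lip[OF g] f H'] .
    show "g x \<le> f x" using DD_H0_half[OF PiG_Lip[OF f] g H] .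
  qed
qed

lemma DD_tri:
  assumes f: "f \<in> LipS D tf" and g: "g \<in> PiG D tf" and h: "h \<in> LipS D tf"
  shows "tf (DD tf f g) (DD tf g h) \<le> DD tf f h"
proof -
  obtain b where C: "pm_cauchy UNIV D b" and gb: "\<And>x. wconv sequentially (\<lambda>n. D (b n) x) (g x)"
    using g by (rule PiG_E) blast
  have fD: "\<And>x. f x \<in> DeltaPlus" and gD: "\<And>x. g x \<in> DeltaPlus" and hD: "\<And>x. h x \<in> DeltaPlus"
    using Lip_DP[OF f] Lip_DP[OF PiG_Lip[OF g]] Lip_DP[OF h] by auto
  obtain r1 :: "nat \<Rightarrow> nat" where r1: "strict_mono r1" and c1: "wconv sequentially (\<lambda>i. f (b (r1 i))) (DD tf f g)"
    using DD_sublim[OF f C gb gD, of "\<lambda>i. i"] by (auto simp: strict_mono_def)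
  obtain r2 :: "nat \<Rightarrow> nat" where r2: "strict_mono r2" and c2: "wconv sequentially (\<lambda>i. h (b (r1 (r2 i)))) (DD tf h g)"
    using DD_sublim[OF h C gb gD r1] by blast
  have c1': "wconv sequentially (\<lambda>i. f (b (r1 (r2 i)))) (DD tf f g)"
    using wconv_subseq[OF c1 r2] .
  have "wconv sequentially (\<lambda>i. tf (f (b (r1 (r2 i)))) (h (b (r1 (r2 i))))) (tf (DD tf f g) (DD tf h g))"
    by (rule tf_cont[OF fD hD DD_DP[of f g, OF fD gD] DD_DP[of h g, OF hD gD] c1' c2])
  moreover have "DD tf h g = DD tf g h" using DD_comm[of h g, OF hD gD] .
  ultimately have conv: "wconv sequentially (\<lambda>i. tf (f (b (r1 (r2 i)))) (h (b (r1 (r2 i))))) (tf (DD tf f g) (DD tf g h))"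
    by simp
  show ?thesis
  proof (rule wconv_le[OF conv wconv_const _ DD_DP[of f h, OF fD hD]])
    show "tf (DD tf f g) (DD tf g h) \<in> DeltaPlus" by (intro tf_DP DD_DP fD gD hD)
    show "eventually (\<lambda>i. tf (f (b (r1 (r2 i)))) (h (b (r1 (r2 i)))) \<le> DD tf f h) sequentially"
      by (intro always_eventually allI DD_upper fD hD)
  qed
qed

end


lemma squeeze_H0:
  assumes L: "wconv Fl Ls H0" and le: "\<And>n. Ls n \<le> Fs n"
    and LD: "\<And>n. Ls n \<in> DeltaPlus" and FD: "\<And>n. Fs n \<in> DeltaPlus"
  shows "wconv Fl Fs H0"
proof -
  have "\<forall>t>0. \<forall>e>0. eventually (\<lambda>n. Ls n (ereal t) > 1 - e) Fl"
    using L wconv_H0_iff[of Ls Fl] LD by blast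
  then have "\<forall>t>0. \<forall>e>0. eventually (\<lambda>n. Fs n (ereal t) > 1 - e) Fl"
  proof (intro allI impI)
    fix t e :: real
    assume H: "\<forall>t>0. \<forall>e>0. eventually (\<lambda>n. Ls n (ereal t) > 1 - e) Fl" and t: "t > 0" and e: "e > 0"
    from H t e have "eventually (\<lambda>n. Ls n (ereal t) > 1 - e) Fl" by blast
    then show "eventually (\<lambda>n. Fs n (ereal t) > 1 - e) Fl"
    proof (rule eventually_mono)
      fix n assume "Ls n (ereal t) > 1 - e"
      moreover have "Ls n (ereal t) \<le> Fs n (ereal t)" using le[of n] by (simp add: le_fun_def)
      ultimately show "Fs n (ereal t) > 1 - e" by linarith
    qed
  qed
  then show ?thesis using wconv_H0_iff[of Fs Fl] FD by blast
qed

lemma filterlim_seq_ge: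
  assumes ge: "\<And>N. f N \<ge> (N::nat)"
  shows "filterlim (f::nat \<Rightarrow> nat) sequentially sequentially"
  unfolding filterlim_at_top
proof (intro allI)
  fix Z :: nat
  show "eventually (\<lambda>x. Z \<le> f x) sequentially"
    unfolding eventually_sequentially
  proof (intro exI allI impI)
    fix n assume "Z \<le> n" then show "Z \<le> f n" using ge[of n] by linarith
  qed
qed

lemma prod_H0_seq:
  fixes S :: "nat \<times> nat \<Rightarrow> dfun"
  assumes SD: "\<And>x. S x \<in> DeltaPlus"
    and H: "\<And>p q :: nat \<Rightarrow> nat. filterlim p sequentially sequentially \<Longrightarrow> filterlim q sequentially sequentially
             \<Longrightarrow> wconv sequentially (\<lambda>i. S (p i, q i)) H0"
  shows "wconv (sequentially \<times>\<^sub>F sequentially) S H0"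
proof -
  have "\<forall>t>0. \<forall>e>0. eventually (\<lambda>x. S x (ereal t) > 1 - e) (sequentially \<times>\<^sub>F sequentially)"
  proof (intro allI impI)
    fix t e :: real assume t: "t > 0" and e: "e > 0"
    show "eventually (\<lambda>x. S x (ereal t) > 1 - e) (sequentially \<times>\<^sub>F sequentially)"
    proof (rule ccontr)
      assume ne: "\<not> ?thesis"
      have "\<forall>N. \<exists>mn. fst mn \<ge> N \<and> snd mn \<ge> N \<and> \<not> S (snd mn, fst mn) (ereal t) > 1 - e"
        using ne unfolding eventually_prod_sequentially by auto
      from choice[OF this] obtain M where M: "\<forall>N. fst (M N) \<ge> N \<and> snd (M N) \<ge> N \<and> \<not> S (snd (M N), fst (M N)) (ereal t) > 1 - e"
        by blast
      define P where "P N = snd (M N)" for N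
      define Q where "Q N = fst (M N)" for N
      have PQ: "\<And>N. Q N \<ge> N" "\<And>N. P N \<ge> N" "\<And>N. \<not> S (P N, Q N) (ereal t) > 1 - e"
        using M by (auto simp: P_def Q_def)
      have "wconv sequentially (\<lambda>i. S (P i, Q i)) H0"
        by (rule H) (use filterlim_seq_ge PQ in blast)+
      then have "eventually (\<lambda>i. S (P i, Q i) (ereal t) > 1 - e) sequentially"
        using wconv_H0_iff[of "\<lambda>i. S (P i, Q i)" sequentially] SD t e by blast
      then obtain i where "S (P i, Q i) (ereal t) > 1 - e"
        unfolding eventually_sequentially by blast
      then show False using PQ(3) by blast
    qed
  qed
  then show ?thesis using wconv_H0_iff[of S] SD by blast
qed

context pmc
begin

lemma cauchy_pair:
  assumes C: "pm_cauchy UNIV D b" and p: "filterlim p sequentially sequentially"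
    and q: "filterlim q sequentially sequentially"
  shows "wconv sequentially (\<lambda>i. D (b (p i)) (b (q i))) H0"
proof -
  have W: "wconv (sequentially \<times>\<^sub>F sequentially) (\<lambda>(n, p). D (b n) (b p)) H0"
    using C by (simp add: pm_cauchy_def)
  have "filterlim (\<lambda>i. (p i, q i)) (sequentially \<times>\<^sub>F sequentially) sequentially"
    by (rule filterlim_Pair[OF p q])
  from wconv_compose[OF W this] show ?thesis by simp
qed

lemma cauchy_conv:
  assumes C: "pm_cauchy UNIV D b"
  shows "\<exists>G. G \<in> DeltaPlus \<and> wconv sequentially (\<lambda>n. D (b n) x) G"
proof -
  obtain r0 :: "nat \<Rightarrow> nat" and G where r0: "strict_mono r0" and G: "G \<in> DeltaPlus"
    and c0: "wconv sequentially (\<lambda>i. D (b (r0 i)) x) G"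
    using helly_DP[of "\<lambda>n. D (b n) x"] D_DP by blast
  have cmp: "G' \<le> G2"
    if G': "G' \<in> DeltaPlus" and p: "filterlim p sequentially sequentially"
      and c: "wconv sequentially (\<lambda>i. D (b (p i)) x) G'"
      and q: "filterlim q sequentially sequentially"
      and d: "wconv sequentially (\<lambda>i. D (b (q i)) x) G2" and G2: "G2 \<in> DeltaPlus"
    for G' G2 p q
  proof (rule wconv_le[OF _ d _ G2])
    have "wconv sequentially (\<lambda>i. tf (D (b (q i)) (b (p i))) (D (b (p i)) x)) (tf H0 G')"
      by (rule tf_cont[OF D_DP D_DP H0_DP G' cauchy_pair[OF C q p] c])
    then show "wconv sequentially (\<lambda>i. tf (D (b (q i)) (b (p i))) (D (b (p i)) x)) G'"
      by (simp add: tf_H0l G')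
    show "eventually (\<lambda>i. tf (D (b (q i)) (b (p i))) (D (b (p i)) x) \<le> D (b (q i)) x) sequentially"
      by (intro always_eventually allI D_tri)
  qed (rule G')
  have "wconv sequentially (\<lambda>n. D (b n) x) G"
  proof (rule wconv_subseq_principle)
    fix r :: "nat \<Rightarrow> nat" assume r: "strict_mono r"
    obtain r' :: "nat \<Rightarrow> nat" and G' where r': "strict_mono r'" and G': "G' \<in> DeltaPlus"
      and c: "wconv sequentially (\<lambda>i. D (b (r (r' i))) x) G'"
      using helly_DP[of "\<lambda>i. D (b (r i)) x"] D_DP by blast
    have rr: "strict_mono (\<lambda>i. r (r' i))" using r r' by (simp add: strict_mono_def)
    have "G' \<le> G" by (rule cmp[OF G' filterlim_subseq[OF rr] c filterlim_subseq[OF r0] c0 G])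
    moreover have "G \<le> G'" by (rule cmp[OF G filterlim_subseq[OF r0] c0 filterlim_subseq[OF rr] c G'])
    ultimately have "G' = G" by simp
    then show "\<exists>r'::nat\<Rightarrow>nat. strict_mono r' \<and> wconv sequentially (\<lambda>i. D (b (r (r' i))) x) G"
      using r' c by blast
  qed
  then show ?thesis using G by blast
qed

lemma DDbar_self: "DDbar D tf f f = H0"
  by (simp add: DDbar_def DD_self)

lemma DDbar_DP: "f \<in> LipS D tf \<Longrightarrow> g \<in> LipS D tf \<Longrightarrow> DDbar D tf f g \<in> DeltaPlus"
proof -
  assume f: "f \<in> LipS D tf" and g: "g \<in> LipS D tf"
  have "DD tf f g \<in> DeltaPlus" by (rule DD_DP) (use Lip_DP[OF f] Lip_DP[OF g] in auto)
  then show ?thesis by (simp add: DDbar_def H0_DP Hinf_DP)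
qed

lemma DDbar_sym: "f \<in> LipS D tf \<Longrightarrow> g \<in> LipS D tf \<Longrightarrow> DDbar D tf f g = DDbar D tf g f"
proof -
  assume f: "f \<in> LipS D tf" and g: "g \<in> LipS D tf"
  have "DD tf f g = DD tf g f" by (rule DD_comm) (use Lip_DP[OF f] Lip_DP[OF g] in auto)
  then show ?thesis unfolding DDbar_def by auto
qed

lemma DDbar_H0: "DDbar D tf f g = H0 \<longleftrightarrow> f = g"
proof (cases "f \<in> PiG D tf \<and> g \<in> PiG D tf")
  case True
  then show ?thesis using DD_H0_eq[of f g] DD_self[of f] by (auto simp: DDbar_def)
next
  case False
  then show ?thesis using H0_ne_Hinf by (auto simp: DDbar_def)
qed

lemma DDbar_tri:
  assumes f: "f \<in> LipS D tf" and g: "g \<in> LipS D tf" and h: "h \<in> LipS D tf"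
  shows "tf (DDbar D tf f g) (DDbar D tf g h) \<le> DDbar D tf f h"
proof (cases "f \<in> PiG D tf \<and> g \<in> PiG D tf \<and> h \<in> PiG D tf")
  case True
  then show ?thesis using DD_tri[OF f _ h, of g] by (simp add: DDbar_def)
next
  case False
  show ?thesis
  proof (cases "f = g")
    case True
    then show ?thesis using DDbar_self[of f] tf_H0l[OF DDbar_DP[OF g h]] by simp
  next
    case fg: False
    show ?thesis
    proof (cases "g = h")
      case True
      then show ?thesis using DDbar_self[of g] tf_H0[OF DDbar_DP[OF f g]] by simp
    next
      case gh: False
      have XD: "DDbar D tf f g \<in> DeltaPlus" "DDbar D tf g h \<in> DeltaPlus" "DDbar D tf f h \<in> DeltaPlus"
        using DDbar_DP f g h by auto
      have "DDbar D tf f g = Hinf \<or> DDbar D tf g h = Hinf"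
        using False fg gh by (auto simp: DDbar_def)
      then have "tf (DDbar D tf f g) (DDbar D tf g h) \<le> Hinf"
      proof
        assume "DDbar D tf f g = Hinf"
        then show ?thesis using tf_le_left[OF Hinf_DP XD(2)] by simp
      next
        assume "DDbar D tf g h = Hinf"
        then show ?thesis using tf_le_left[OF Hinf_DP XD(1)] tf_comm[OF XD(1) Hinf_DP] by simp
      qed
      also have "\<dots> \<le> DDbar D tf f h" by (rule Hinf_le[OF XD(3)])
      finally show ?thesis .
    qed
  qed
qed

lemma pm_Lip: "pm_space (LipS D tf) (DDbar D tf) tf"
  unfolding pm_space_def
proof (intro conjI ballI TF)
  fix p q r assume p: "p \<in> LipS D tf" and q: "q \<in> LipS D tf" and r: "r \<in> LipS D tf"
  show "tf (DDbar D tf p q) (DDbar D tf q r) \<le> DDbar D tf p r" by (rule DDbar_tri[OF p q r])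
next
  fix p q assume p: "p \<in> LipS D tf" and q: "q \<in> LipS D tf"
  show "DDbar D tf p q \<in> DeltaPlus" by (rule DDbar_DP[OF p q])
  show "DDbar D tf p q = DDbar D tf q p" by (rule DDbar_sym[OF p q])
  show "(DDbar D tf p q = H0) = (p = q)" by (rule DDbar_H0)
qed

end


lemma wconv_prod_H0_iff:
  assumes "\<And>n p. S n p \<in> DeltaPlus"
  shows "wconv (sequentially \<times>\<^sub>F sequentially) (\<lambda>(n, p). S n p) H0 \<longleftrightarrow>
         (\<forall>t>0. \<forall>e>0. \<exists>N. \<forall>m\<ge>N. \<forall>n\<ge>N. S n m (ereal t) > 1 - e)"
proof -
  have "\<And>x. (\<lambda>(n, p). S n p) x \<in> DeltaPlus" using assms by (simp add: case_prod_beta)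
  from wconv_H0_iff[of "\<lambda>(n, p). S n p", OF this]
  show ?thesis by (simp add: case_prod_beta eventually_prod_sequentially)
qed

context pmc
begin

lemma complete_PiG:
  assumes fP: "\<And>n. f n \<in> PiG D tf"
    and Cf: "wconv (sequentially \<times>\<^sub>F sequentially) (\<lambda>(n, p). DD tf (f n) (f p)) H0"
  shows "\<exists>g\<in>PiG D tf. wconv sequentially (\<lambda>n. DD tf (f n) g) H0"
proof -
  have fL: "\<And>n. f n \<in> LipS D tf" using fP PiG_Lip by blast
  have fD: "\<And>n x. f n x \<in> DeltaPlus" using Lip_DP[OF fL] .
  have "\<forall>n. \<exists>a. pm_cauchy UNIV D a \<and> (\<forall>x. wconv sequentially (\<lambda>k. D (a k) x) (f n x))"
    using fP by (simp add: PiG_def)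
  from choice[OF this] obtain a where a1: "\<And>n. pm_cauchy UNIV D (a n)"
    and a2: "\<And>n x. wconv sequentially (\<lambda>k. D (a n k) x) (f n x)" by blast
  have sl: "wconv sequentially (\<lambda>k. f n (a n k)) H0" for n
    by (rule self_lim[OF a1 a2 fD])
  have "\<exists>k. f n (a n k) (ereal (inverse (real (Suc n)))) > 1 - inverse (real (Suc n))" for n
  proof -
    have "\<forall>t>0. \<forall>e>0. eventually (\<lambda>k. f n (a n k) (ereal t) > 1 - e) sequentially"
      using sl[of n] wconv_H0_iff[of "\<lambda>k. f n (a n k)" sequentially] fD by blast
    then have "eventually (\<lambda>k. f n (a n k) (ereal (inverse (real (Suc n)))) > 1 - inverse (real (Suc n))) sequentially"
      by simp
    then show ?thesis unfolding eventually_sequentially by blast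
  qed
  then obtain kk where kk: "\<And>n. f n (a n (kk n)) (ereal (inverse (real (Suc n)))) > 1 - inverse (real (Suc n))"
    by metis
  define b where "b n = a n (kk n)" for n
  define E where "E n = f n (b n)" for n
  have ED: "E n \<in> DeltaPlus" for n by (simp add: E_def fD)
  have Ebd: "E n (ereal (inverse (real (Suc n)))) > 1 - inverse (real (Suc n))" for n
    using kk by (simp add: E_def b_def)
  have EH0: "wconv sequentially E H0"
  proof -
    have "\<forall>t>0. \<forall>e>0. eventually (\<lambda>n. E n (ereal t) > 1 - e) sequentially"
    proof (intro allI impI)
      fix t e :: real assume t: "t > 0" and e: "e > 0"
      obtain M where M: "inverse (real (Suc M)) < min t e"
        using reals_Archimedean[of "min t e"] t e by auto
      show "eventually (\<lambda>n. E n (ereal t) > 1 - e) sequentially"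
        unfolding eventually_sequentially
      proof (intro exI allI impI)
        fix n assume n: "M \<le> n"
        have le: "inverse (real (Suc n)) \<le> inverse (real (Suc M))"
          using n by (simp add: le_imp_inverse_le)
        have "E n (ereal (inverse (real (Suc n)))) \<le> E n (ereal t)"
        proof (rule DP_monoD[OF ED])
          have "inverse (real (Suc n)) \<le> t" using M le by linarith
          then show "ereal (inverse (real (Suc n))) \<le> ereal t" by simp
        qed
        then show "E n (ereal t) > 1 - e" using Ebd[of n] M le by linarith
      qed
    qed
    then show ?thesis using wconv_H0_iff[of E sequentially] ED by blast
  qed
  have E_eq: "E n = DD tf (f n) (pm_delta D (b n))" for n
    by (simp add: E_def DD_delta[OF fL])
  have E_eq': "E n = DD tf (pm_delta D (b n)) (f n)" for n
    unfolding E_eq by (rule DD_comm) (auto simp: fD pm_delta_def D_DP)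
  have CD: "DD tf (f n) (f m) \<in> DeltaPlus" for n m by (rule DD_DP) (auto simp: fD)
  have lb: "tf (E n) (tf (DD tf (f n) (f m)) (E m)) \<le> D (b n) (b m)" for n m
  proof -
    have "tf (DD tf (f n) (f m)) (DD tf (f m) (pm_delta D (b m))) \<le> DD tf (f n) (pm_delta D (b m))"
      by (rule DD_tri[OF fL fP delta_Lip])
    then have "tf (DD tf (f n) (f m)) (E m) \<le> DD tf (f n) (pm_delta D (b m))"
      by (simp add: E_eq)
    then have "tf (E n) (tf (DD tf (f n) (f m)) (E m)) \<le> tf (E n) (DD tf (f n) (pm_delta D (b m)))"
      by (intro tf_mono2 tf_DP CD ED DD_DP) (auto simp: fD pm_delta_def D_DP)
    also have "\<dots> = tf (DD tf (pm_delta D (b n)) (f n)) (DD tf (f n) (pm_delta D (b m)))"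
      by (simp add: E_eq')
    also have "\<dots> \<le> DD tf (pm_delta D (b n)) (pm_delta D (b m))"
      by (rule DD_tri[OF delta_Lip fP delta_Lip])
    also have "\<dots> = D (b n) (b m)" by (rule DD_delta_delta)
    finally show ?thesis .
  qed
  have bC: "pm_cauchy UNIV D b"
    unfolding pm_cauchy_def
  proof (intro conjI allI UNIV_I)
    show "wconv (sequentially \<times>\<^sub>F sequentially) (\<lambda>(n, p). D (b n) (b p)) H0"
    proof (rule prod_H0_seq)
      show "\<And>x. (\<lambda>(n, p). D (b n) (b p)) x \<in> DeltaPlus" by (simp add: case_prod_beta D_DP)
      fix p q :: "nat \<Rightarrow> nat"
      assume p: "filterlim p sequentially sequentially" and q: "filterlim q sequentially sequentially"
      have c1: "wconv sequentially (\<lambda>i. DD tf (f (p i)) (f (q i))) H0"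
        using wconv_compose[OF Cf filterlim_Pair[OF p q]] by simp
      have c2: "wconv sequentially (\<lambda>i. tf (DD tf (f (p i)) (f (q i))) (E (q i))) (tf H0 H0)"
        by (rule tf_cont[OF CD ED H0_DP H0_DP c1 wconv_compose[OF EH0 q]])
      have c3: "wconv sequentially (\<lambda>i. tf (E (p i)) (tf (DD tf (f (p i)) (f (q i))) (E (q i)))) (tf H0 (tf H0 H0))"
        by (rule tf_cont[OF ED tf_DP[OF CD ED] H0_DP tf_DP[OF H0_DP H0_DP] wconv_compose[OF EH0 p] c2])
      have "wconv sequentially (\<lambda>i. D (b (p i)) (b (q i))) H0"
      proof (rule squeeze_H0)
        show "wconv sequentially (\<lambda>i. tf (E (p i)) (tf (DD tf (f (p i)) (f (q i))) (E (q i)))) H0"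
          using c3 by (simp add: tf_H0 H0_DP)
      qed (auto simp: lb D_DP tf_DP CD ED)
      then show "wconv sequentially (\<lambda>i. (\<lambda>(n, p). D (b n) (b p)) (p i, q i)) H0" by simp
    qed
  qed
  define g where "g x = (SOME G. G \<in> DeltaPlus \<and> wconv sequentially (\<lambda>n. D (b n) x) G)" for x
  have g: "g x \<in> DeltaPlus \<and> wconv sequentially (\<lambda>n. D (b n) x) (g x)" for x
    unfolding g_def by (rule someI_ex[OF cauchy_conv[OF bC]])
  have gD: "\<And>x. g x \<in> DeltaPlus" and gc: "\<And>x. wconv sequentially (\<lambda>n. D (b n) x) (g x)"
    using g by auto
  have gL: "g \<in> LipS D tf"
    unfolding LipS_def
  proof (intro CollectI conjI allI gD)
    fix x y
    show "tf (D x y) (g y) \<le> g x"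
    proof (rule wconv_le[OF _ gc tf_DP[OF D_DP gD] gD])
      show "wconv sequentially (\<lambda>n. tf (D x y) (D (b n) y)) (tf (D x y) (g y))"
        by (rule tf_cont[OF D_DP D_DP D_DP gD wconv_const gc])
      show "eventually (\<lambda>n. tf (D x y) (D (b n) y) \<le> D (b n) x) sequentially"
      proof (intro always_eventually allI)
        fix n
        have "tf (D x y) (D (b n) y) = tf (D (b n) y) (D y x)"
          by (simp add: tf_comm[OF D_DP D_DP] D_sym[of x y])
        also have "\<dots> \<le> D (b n) x" by (rule D_tri)
        finally show "tf (D x y) (D (b n) y) \<le> D (b n) x" .
      qed
    qed
  qed
  have gP: "g \<in> PiG D tf" unfolding PiG_def using gL bC gc by blast
  have "wconv sequentially (\<lambda>n. DD tf (f n) g) H0"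
  proof (rule squeeze_H0)
    have sg: "wconv sequentially (\<lambda>n. g (b n)) H0" by (rule self_lim[OF bC gc gD])
    have "wconv sequentially (\<lambda>n. tf (E n) (g (b n))) (tf H0 H0)"
      by (rule tf_cont[OF ED gD H0_DP H0_DP EH0 sg])
    then show "wconv sequentially (\<lambda>n. tf (E n) (g (b n))) H0" by (simp add: tf_H0 H0_DP)
    fix n
    have "tf (DD tf (f n) (pm_delta D (b n))) (DD tf (pm_delta D (b n)) g) \<le> DD tf (f n) g"
      by (rule DD_tri[OF fL delta_PiG gL])
    moreover have "DD tf (pm_delta D (b n)) g = g (b n)"
    proof -
      have "DD tf (pm_delta D (b n)) g = DD tf g (pm_delta D (b n))"
        by (rule DD_comm) (auto simp: gD pm_delta_def D_DP)
      also have "\<dots> = g (b n)" by (rule DD_delta[OF gL])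
      finally show ?thesis .
    qed
    ultimately show "tf (E n) (g (b n)) \<le> DD tf (f n) g" by (simp add: E_eq)
    show "tf (E n) (g (b n)) \<in> DeltaPlus" by (rule tf_DP[OF ED gD])
    show "DD tf (f n) g \<in> DeltaPlus" by (rule DD_DP) (auto simp: fD gD)
  qed
  then show ?thesis using gP by blast
qed

end


context pmc
begin

lemma pm_complete_Lip: "pm_complete (LipS D tf) (DDbar D tf)"
  unfolding pm_complete_def
proof (intro allI impI)
  fix z assume Cz: "pm_cauchy (LipS D tf) (DDbar D tf) z"
  have zL: "\<And>n. z n \<in> LipS D tf" using Cz by (simp add: pm_cauchy_def)
  have W: "wconv (sequentially \<times>\<^sub>F sequentially) (\<lambda>(n, p). DDbar D tf (z n) (z p)) H0"
    using Cz by (simp add: pm_cauchy_def)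
  have zD: "\<And>n p. DDbar D tf (z n) (z p) \<in> DeltaPlus" using DDbar_DP zL by blast
  have WW: "\<forall>t>0. \<forall>e>0. \<exists>N. \<forall>m\<ge>N. \<forall>n\<ge>N. DDbar D tf (z n) (z m) (ereal t) > 1 - e"
    using W wconv_prod_H0_iff[of "\<lambda>n p. DDbar D tf (z n) (z p)"] zD by blast
  then obtain N where N: "\<And>m n. m \<ge> N \<Longrightarrow> n \<ge> N \<Longrightarrow> DDbar D tf (z n) (z m) (ereal 1) > 1 - 1/2"
  proof -
    have "\<exists>N. \<forall>m\<ge>N. \<forall>n\<ge>N. DDbar D tf (z n) (z m) (ereal 1) > 1 - 1/2"
      by (rule WW[rule_format]) simp_all
    then show ?thesis using that by blast
  qed
  have nz: "(z n \<in> PiG D tf \<and> z m \<in> PiG D tf) \<or> z n = z m" if "n \<ge> N" "m \<ge> N" for n m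
  proof (rule ccontr)
    assume na: "\<not> ?thesis"
    then have "\<not> (z n \<in> PiG D tf \<and> z m \<in> PiG D tf)" "z n \<noteq> z m" by auto
    then have "DDbar D tf (z n) (z m) = Hinf" unfolding DDbar_def by presburger
    then show False using N[OF that(2,1)] by (simp add: Hinf_def)
  qed
  show "\<exists>x\<in>LipS D tf. wconv sequentially (\<lambda>n. DDbar D tf (z n) x) H0"
  proof (cases "\<exists>n\<ge>N. z n \<notin> PiG D tf")
    case True
    then obtain n0 where n0: "n0 \<ge> N" "z n0 \<notin> PiG D tf" by blast
    have eq: "z m = z n0" if "m \<ge> N" for m using nz[OF that n0(1)] n0(2) by blast
    have "wconv sequentially (\<lambda>n. DDbar D tf (z n) (z n0)) H0"
    proof -
      have "\<forall>t>0. \<forall>e>0. eventually (\<lambda>n. DDbar D tf (z n) (z n0) (ereal t) > 1 - e) sequentially"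
      proof (intro allI impI)
        fix t e :: real assume t: "t > 0" and e: "e > 0"
        show "eventually (\<lambda>n. DDbar D tf (z n) (z n0) (ereal t) > 1 - e) sequentially"
          unfolding eventually_sequentially
        proof (intro exI allI impI)
          fix n assume "N \<le> n"
          then have "DDbar D tf (z n) (z n0) = H0" using eq DDbar_self by simp
          then show "DDbar D tf (z n) (z n0) (ereal t) > 1 - e" using t e by (simp add: H0_def)
        qed
      qed
      then show ?thesis using wconv_H0_iff[of "\<lambda>n. DDbar D tf (z n) (z n0)" sequentially] zD by blast
    qed
    then show ?thesis using zL by blast
  next
    case False
    then have zP: "\<And>n. n \<ge> N \<Longrightarrow> z n \<in> PiG D tf" by blast
    define f where "f n = z (n + N)" for n
    have fP: "\<And>n. f n \<in> PiG D tf" by (simp add: f_def zP)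
    have fxD: "\<And>n x. f n x \<in> DeltaPlus" using Lip_DP[OF PiG_Lip[OF fP]] .
    have fD: "\<And>n p. DD tf (f n) (f p) \<in> DeltaPlus"
      using DD_DP[of "f n" "f p" for n p, OF fxD fxD] .
    have Cf: "wconv (sequentially \<times>\<^sub>F sequentially) (\<lambda>(n, p). DD tf (f n) (f p)) H0"
      unfolding wconv_prod_H0_iff[of "\<lambda>n p. DD tf (f n) (f p)", OF fD]
    proof (intro allI impI)
      fix t e :: real assume t: "t > 0" and e: "e > 0"
      obtain M where M: "\<And>m n. m \<ge> M \<Longrightarrow> n \<ge> M \<Longrightarrow> DDbar D tf (z n) (z m) (ereal t) > 1 - e"
        using WW[rule_format, OF t e] by blast
      show "\<exists>N'. \<forall>m\<ge>N'. \<forall>n\<ge>N'. DD tf (f n) (f m) (ereal t) > 1 - e"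
      proof (intro exI allI impI)
        fix m n assume "M \<le> m" "M \<le> n"
        then have "DDbar D tf (z (n + N)) (z (m + N)) (ereal t) > 1 - e" using M[of "m + N" "n + N"] by simp
        then show "DD tf (f n) (f m) (ereal t) > 1 - e" using fP[of n] fP[of m]
          by (simp add: f_def DDbar_def)
      qed
    qed
    obtain g where gP: "g \<in> PiG D tf" and gc: "wconv sequentially (\<lambda>n. DD tf (f n) g) H0"
      using complete_PiG[OF fP Cf] by blast
    have gxD: "\<And>x. g x \<in> DeltaPlus" using Lip_DP[OF PiG_Lip[OF gP]] .
    have gDD: "\<And>n. DD tf (f n) g \<in> DeltaPlus"
      using DD_DP[of "f n" g for n, OF fxD gxD] .
    have "wconv sequentially (\<lambda>n. DDbar D tf (z n) g) H0"
    proof -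
      have H: "\<forall>t>0. \<forall>e>0. eventually (\<lambda>n. DD tf (f n) g (ereal t) > 1 - e) sequentially"
        using gc wconv_H0_iff[of "\<lambda>n. DD tf (f n) g" sequentially] gDD by blast
      have "\<forall>t>0. \<forall>e>0. eventually (\<lambda>n. DDbar D tf (z n) g (ereal t) > 1 - e) sequentially"
      proof (intro allI impI)
        fix t e :: real assume t: "t > 0" and e: "e > 0"
        obtain M where M: "\<And>n. n \<ge> M \<Longrightarrow> DD tf (f n) g (ereal t) > 1 - e"
          using H[rule_format, OF t e] unfolding eventually_sequentially by blast
        show "eventually (\<lambda>n. DDbar D tf (z n) g (ereal t) > 1 - e) sequentially"
          unfolding eventually_sequentially
        proof (intro exI allI impI)
          fix n assume n: "M + N \<le> n"
          then have "DD tf (f (n - N)) g (ereal t) > 1 - e" using M[of "n - N"] by simp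
          moreover have "f (n - N) = z n" using n by (simp add: f_def)
          moreover have "z n \<in> PiG D tf" using n zP by simp
          ultimately show "DDbar D tf (z n) g (ereal t) > 1 - e" using gP by (simp add: DDbar_def)
        qed
      qed
      moreover have "\<And>n. DDbar D tf (z n) g \<in> DeltaPlus" using DDbar_DP zL PiG_Lip[OF gP] by blast
      ultimately show ?thesis using wconv_H0_iff[of "\<lambda>n. DDbar D tf (z n) g" sequentially] by blast
    qed
    then show ?thesis using PiG_Lip[OF gP] by blast
  qed
qed

lemma group_hom:
  assumes G: "group Gr" and U: "carrier Gr = UNIV" and I: "invariant_pm_group Gr D"
  shows "pm_delta D (a \<otimes>\<^bsub>Gr\<^esub> b) = odot Gr tf (pm_delta D a) (pm_delta D b)"
proof (rule ext, rule ext)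
  fix x t
  interpret group Gr by (rule G)
  have inv1: "D (p \<otimes>\<^bsub>Gr\<^esub> r) (q \<otimes>\<^bsub>Gr\<^esub> r) = D p q" and inv2: "D (r \<otimes>\<^bsub>Gr\<^esub> p) (r \<otimes>\<^bsub>Gr\<^esub> q) = D p q" for p q r
    using I by (auto simp: invariant_pm_group_def)
  define A where "A = {(y, z). y \<otimes>\<^bsub>Gr\<^esub> z = x}"
  define w where "w = (x \<otimes>\<^bsub>Gr\<^esub> inv\<^bsub>Gr\<^esub> b, b)"
  have "(x \<otimes>\<^bsub>Gr\<^esub> inv\<^bsub>Gr\<^esub> b) \<otimes>\<^bsub>Gr\<^esub> b = x"
    using U by (simp add: m_assoc l_inv)
  then have wA: "w \<in> A" by (simp add: A_def w_def)
  have up: "tf (D (fst yz) a) (D (snd yz) b) t \<le> D x (a \<otimes>\<^bsub>Gr\<^esub> b) t" if yzA: "yz \<in> A" for yz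
  proof -
    obtain y z where yz: "yz = (y, z)" "y \<otimes>\<^bsub>Gr\<^esub> z = x" using yzA by (auto simp: A_def)
    have "tf (D (y \<otimes>\<^bsub>Gr\<^esub> z) (a \<otimes>\<^bsub>Gr\<^esub> z)) (D (a \<otimes>\<^bsub>Gr\<^esub> z) (a \<otimes>\<^bsub>Gr\<^esub> b)) \<le> D (y \<otimes>\<^bsub>Gr\<^esub> z) (a \<otimes>\<^bsub>Gr\<^esub> b)" by (rule D_tri)
    then have "tf (D y a) (D z b) \<le> D (y \<otimes>\<^bsub>Gr\<^esub> z) (a \<otimes>\<^bsub>Gr\<^esub> b)" by (simp only: inv1 inv2)
    then have "tf (D y a) (D z b) \<le> D x (a \<otimes>\<^bsub>Gr\<^esub> b)" using yz(2) by simp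
    then show ?thesis using yz by (simp add: le_fun_def)
  qed
  have wv: "tf (D (fst w) a) (D (snd w) b) t = D x (a \<otimes>\<^bsub>Gr\<^esub> b) t"
  proof -
    have "tf (D (fst w) a) (D (snd w) b) = D (x \<otimes>\<^bsub>Gr\<^esub> inv\<^bsub>Gr\<^esub> b) a" by (simp add: w_def D_self tf_H0 D_DP)
    also have "\<dots> = D ((x \<otimes>\<^bsub>Gr\<^esub> inv\<^bsub>Gr\<^esub> b) \<otimes>\<^bsub>Gr\<^esub> b) (a \<otimes>\<^bsub>Gr\<^esub> b)" by (simp add: inv1)
    also have "\<dots> = D x (a \<otimes>\<^bsub>Gr\<^esub> b)" using \<open>(x \<otimes>\<^bsub>Gr\<^esub> inv\<^bsub>Gr\<^esub> b) \<otimes>\<^bsub>Gr\<^esub> b = x\<close> by simp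
    finally show ?thesis by simp
  qed
  have bdd: "bdd_above ((\<lambda>yz. tf (D (fst yz) a) (D (snd yz) b) t) ` A)"
    using up by (auto intro!: bdd_aboveI[of _ "D x (a \<otimes>\<^bsub>Gr\<^esub> b) t"])
  have "(SUP yz\<in>A. tf (D (fst yz) a) (D (snd yz) b) t) = D x (a \<otimes>\<^bsub>Gr\<^esub> b) t"
  proof (rule antisym)
    show "(SUP yz\<in>A. tf (D (fst yz) a) (D (snd yz) b) t) \<le> D x (a \<otimes>\<^bsub>Gr\<^esub> b) t"
      using wA up by (intro cSUP_least) auto
    show "D x (a \<otimes>\<^bsub>Gr\<^esub> b) t \<le> (SUP yz\<in>A. tf (D (fst yz) a) (D (snd yz) b) t)"
      using cSUP_upper[OF wA bdd] wv by simp
  qed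
  then show "pm_delta D (a \<otimes>\<^bsub>Gr\<^esub> b) x t = odot Gr tf (pm_delta D a) (pm_delta D b) x t"
    by (simp add: odot_def pm_delta_def A_def)
qed

end

theorem mainTheorem14:
  fixes D :: "'a \<Rightarrow> 'a \<Rightarrow> dfun" and tf :: "dfun \<Rightarrow> dfun \<Rightarrow> dfun"
    and Gr :: "('a, 'b) monoid_scheme"
  assumes "pm_space UNIV D tf" and "tf_continuous tf"
  shows "(pm_space (LipS D tf) (DDbar D tf) tf \<and> pm_complete (LipS D tf) (DDbar D tf)
          \<and> (\<forall>a. pm_delta D a \<in> LipS D tf) \<and> inj (pm_delta D)
          \<and> (\<forall>a b. DDbar D tf (pm_delta D a) (pm_delta D b) = D a b))
       \<and> (group Gr \<and> carrier Gr = UNIV \<and> invariant_pm_group Gr D \<and> tf_sup_continuous tf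
          \<longrightarrow> (\<forall>a b. pm_delta D (a \<otimes>\<^bsub>Gr\<^esub> b) = odot Gr tf (pm_delta D a) (pm_delta D b)))"
proof -
  interpret pmc D tf using assms by (unfold_locales)
  have inj: "inj (pm_delta D)"
  proof (rule injI)
    fix a b assume "pm_delta D a = pm_delta D b"
    then have "pm_delta D a a = pm_delta D b a" by simp
    then have "D a b = H0" by (simp add: pm_delta_def D_self D_sym[of b a])
    then show "a = b" using D_H0 by simp
  qed
  have iso: "DDbar D tf (pm_delta D a) (pm_delta D b) = D a b" for a b
    by (simp add: DDbar_def delta_PiG DD_delta_delta)
  have g: "group Gr \<and> carrier Gr = UNIV \<and> invariant_pm_group Gr D \<and> tf_sup_continuous tf
          \<longrightarrow> (\<forall>a b. pm_delta D (a \<otimes>\<^bsub>Gr\<^esub> b) = odot Gr tf (pm_delta D a) (pm_delta D b))"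
  proof (intro impI allI)
    fix a b assume h: "group Gr \<and> carrier Gr = UNIV \<and> invariant_pm_group Gr D \<and> tf_sup_continuous tf"
    show "pm_delta D (a \<otimes>\<^bsub>Gr\<^esub> b) = odot Gr tf (pm_delta D a) (pm_delta D b)"
      by (rule group_hom) (use h in auto)
  qed
  have d: "\<forall>a. pm_delta D a \<in> LipS D tf" using delta_Lip by simp
  have i: "\<forall>a b. DDbar D tf (pm_delta D a) (pm_delta D b) = D a b" using iso by simp
  show ?thesis
    using pm_Lip pm_complete_Lip d inj i g by (intro conjI)
qed


end
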